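(* The product in $\mathbf{Sys}(L)$ of a set-indexed family of sober affine systems is sober.
   Context: Fix a variety $\mathbf{A}$ of algebras (full subcategory of the category of $\Omega$-algebras and homomorphisms closed under products, subalgebras and homomorphic images) having set-indexed coproducts $(A_i\xrightarrow{\mu_i}\coprod_iA_i)_i$. Fix an $\mathbf{A}$-algebra $L$; $L^X$ is the power algebra. An affine system is $(X,\kappa,A)$ with $X$ a set, $A$ an algebra, $\kappa:A\to L^X$ a homomorphism; a morphism $(f,\varphi):(X_1,\kappa_1,A_1)\to(X_2,\kappa_2,A_2)$ is a map $f:X_1\to X_2$ with a homomorphism $\varphi:A_2\to A_1$ such that $\kappa_1(\varphi(a))(x)=\kappa_2(a)(f(x))$; this is $\mathbf{Sys}(L)$. For an algebra $A$, $Pt_L(A)$ is the set of homomorphisms $A\to L$; for a system $(X,\kappa,A)$, $\ell:X\to Pt_L(A)$ is $\ell(x)(a)=\kappa(a)(x)$, and the system is sober if $\ell$ is bijective. The product of $(X_i,\kappa_i,A_i)_{i\in I}$ is $(\prod_iX_i,\kappa,\coprod_iA_i)$ with projections $(\pi_i,\mu_i)$, where $\kappa$ is the unique homomorphism with $\kappa(\mu_i(a))(x)=\kappa_i(a)(x_i)$. *)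

theory Defs
  imports "HOL-Library.FuncSet"
begin

text \<open>A signature is given by an arity map ar :: 'o => 'n set: the operation symbol w
takes a family of arguments indexed by ar w. Argument families are represented as
extensional functions (undefined outside ar w).\<close>

record ('a, 'o, 'n) alg =
  carrier :: "'a set"
  ops :: "'o \<Rightarrow> ('n \<Rightarrow> 'a) \<Rightarrow> 'a"

definition algebra :: "('o \<Rightarrow> 'n set) \<Rightarrow> ('a, 'o, 'n) alg \<Rightarrow> bool" where
  "algebra ar A \<longleftrightarrow>
     (\<forall>w f. f \<in> ar w \<rightarrow>\<^sub>E carrier A \<longrightarrow> ops A w f \<in> carrier A)"

definition hom :: "('o \<Rightarrow> 'n set) \<Rightarrow> ('a, 'o, 'n) alg \<Rightarrow> ('b, 'o, 'n) alg \<Rightarrow> ('a \<Rightarrow> 'b) \<Rightarrow> bool" where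
  "hom ar A B h \<longleftrightarrow>
     h \<in> carrier A \<rightarrow> carrier B \<and>
     (\<forall>w f. f \<in> ar w \<rightarrow>\<^sub>E carrier A \<longrightarrow>
        h (ops A w f) = ops B w (\<lambda>j\<in>ar w. h (f j)))"

definition power :: "('o \<Rightarrow> 'n set) \<Rightarrow> ('l, 'o, 'n) alg \<Rightarrow> 'x set \<Rightarrow> ('x \<Rightarrow> 'l, 'o, 'n) alg" where
  "power ar L X =
     \<lparr> carrier = X \<rightarrow>\<^sub>E carrier L,
       ops = (\<lambda>w F. \<lambda>x\<in>X. ops L w (\<lambda>j\<in>ar w. F j x)) \<rparr>"

datatype ('v, 'o, 'n) trm = Var 'v | Op 'o "'n \<Rightarrow> ('v, 'o, 'n) trm"

primrec eval :: "('o \<Rightarrow> 'n set) \<Rightarrow> ('a, 'o, 'n) alg \<Rightarrow> ('v \<Rightarrow> 'a) \<Rightarrow> ('v, 'o, 'n) trm \<Rightarrow> 'a" where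
  "eval ar A \<sigma> (Var v) = \<sigma> v"
| "eval ar A \<sigma> (Op w ts) = ops A w (\<lambda>j\<in>ar w. eval ar A \<sigma> (ts j))"

definition in_variety ::
  "('o \<Rightarrow> 'n set) \<Rightarrow> (('v, 'o, 'n) trm \<times> ('v, 'o, 'n) trm) set \<Rightarrow> ('a, 'o, 'n) alg \<Rightarrow> bool" where
  "in_variety ar E A \<longleftrightarrow> algebra ar A \<and>
     (\<forall>(s, t)\<in>E. \<forall>\<sigma>. \<sigma> \<in> UNIV \<rightarrow> carrier A \<longrightarrow> eval ar A \<sigma> s = eval ar A \<sigma> t)"

text \<open>C with injections mu is a coproduct of the family (A i)_{i in I} in the variety,
where the universal property is required against all algebras of the variety whose
carrier lives in the type 'b (a HOL type-level restriction; a genuine coproduct in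
the variety satisfies this for every type 'b).\<close>
definition is_coproduct ::
  "'b itself \<Rightarrow> ('o \<Rightarrow> 'n set) \<Rightarrow> (('v, 'o, 'n) trm \<times> ('v, 'o, 'n) trm) set \<Rightarrow>
   'i set \<Rightarrow> ('i \<Rightarrow> ('a, 'o, 'n) alg) \<Rightarrow> ('c, 'o, 'n) alg \<Rightarrow> ('i \<Rightarrow> 'a \<Rightarrow> 'c) \<Rightarrow> bool" where
  "is_coproduct (_ :: 'b itself) ar E I A C \<mu> \<longleftrightarrow>
     in_variety ar E C \<and> (\<forall>i\<in>I. hom ar (A i) C (\<mu> i)) \<and>
     (\<forall>(B :: ('b, 'o, 'n) alg) f. in_variety ar E B \<and> (\<forall>i\<in>I. hom ar (A i) B (f i)) \<longrightarrow>
        (\<exists>!g. g \<in> extensional (carrier C) \<and> hom ar C B g \<and>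
              (\<forall>i\<in>I. \<forall>a\<in>carrier (A i). g (\<mu> i a) = f i a)))"

definition affine_system ::
  "('o \<Rightarrow> 'n set) \<Rightarrow> ('l, 'o, 'n) alg \<Rightarrow> 'x set \<Rightarrow> ('a \<Rightarrow> 'x \<Rightarrow> 'l) \<Rightarrow> ('a, 'o, 'n) alg \<Rightarrow> bool" where
  "affine_system ar L X \<kappa> A \<longleftrightarrow> algebra ar A \<and> hom ar A (power ar L X) \<kappa>"

definition Pt :: "('o \<Rightarrow> 'n set) \<Rightarrow> ('l, 'o, 'n) alg \<Rightarrow> ('a, 'o, 'n) alg \<Rightarrow> ('a \<Rightarrow> 'l) set" where
  "Pt ar L A = {h. h \<in> extensional (carrier A) \<and> hom ar A L h}"

definition ell :: "('a, 'o, 'n) alg \<Rightarrow> ('a \<Rightarrow> 'x \<Rightarrow> 'l) \<Rightarrow> 'x \<Rightarrow> ('a \<Rightarrow> 'l)" where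
  "ell A \<kappa> x = (\<lambda>a\<in>carrier A. \<kappa> a x)"

definition sober ::
  "('o \<Rightarrow> 'n set) \<Rightarrow> ('l, 'o, 'n) alg \<Rightarrow> 'x set \<Rightarrow> ('a \<Rightarrow> 'x \<Rightarrow> 'l) \<Rightarrow> ('a, 'o, 'n) alg \<Rightarrow> bool" where
  "sober ar L X \<kappa> A \<longleftrightarrow> bij_betw (ell A \<kappa>) X (Pt ar L A)"

definition is_product_map ::
  "('o \<Rightarrow> 'n set) \<Rightarrow> ('l, 'o, 'n) alg \<Rightarrow> 'i set \<Rightarrow> ('i \<Rightarrow> 'x set) \<Rightarrow> ('i \<Rightarrow> 'a \<Rightarrow> 'x \<Rightarrow> 'l) \<Rightarrow>
   ('i \<Rightarrow> ('a, 'o, 'n) alg) \<Rightarrow> ('c, 'o, 'n) alg \<Rightarrow> ('i \<Rightarrow> 'a \<Rightarrow> 'c) \<Rightarrow> ('c \<Rightarrow> ('i \<Rightarrow> 'x) \<Rightarrow> 'l) \<Rightarrow> bool" where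
  "is_product_map ar L I X \<kappa> A C \<mu> K \<longleftrightarrow>
     hom ar C (power ar L (Pi\<^sub>E I X)) K \<and>
     (\<forall>i\<in>I. \<forall>a\<in>carrier (A i). \<forall>x\<in>Pi\<^sub>E I X. K (\<mu> i a) x = \<kappa> i a (x i))"

end

theory Submission
  imports Defs
begin

lemma hom_comp:
  assumes "hom ar A B f" "hom ar B C g"
  shows "hom ar A C (\<lambda>a. g (f a))"
proof -
  have "\<And>w h. h \<in> ar w \<rightarrow>\<^sub>E carrier A \<Longrightarrow> (\<lambda>j\<in>ar w. f (h j)) \<in> ar w \<rightarrow>\<^sub>E carrier B"
    using assms(1) unfolding hom_def by auto
  then show ?thesis using assms unfolding hom_def
    by (auto simp: Pi_iff cong: restrict_cong)
qed

lemma hom_restrict: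
  assumes "hom ar A B f" "algebra ar A"
  shows "hom ar A B (\<lambda>a\<in>carrier A. f a)"
proof -
  have "\<And>w h. h \<in> ar w \<rightarrow>\<^sub>E carrier A \<Longrightarrow> (\<lambda>j\<in>ar w. (\<lambda>a\<in>carrier A. f a) (h j)) = (\<lambda>j\<in>ar w. f (h j))"
    by (auto intro!: restrict_ext)
  then show ?thesis using assms unfolding hom_def algebra_def by auto
qed

lemma hom_eval:
  assumes "hom ar C (power ar L Y) K" "x \<in> Y"
  shows "hom ar C L (\<lambda>c. K c x)"
proof -
  have "\<And>w h. h \<in> ar w \<rightarrow>\<^sub>E carrier C \<Longrightarrow> (\<lambda>j\<in>ar w. (\<lambda>j\<in>ar w. K (h j)) j x) = (\<lambda>j\<in>ar w. K (h j) x)"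
    by (auto intro!: restrict_ext)
  then show ?thesis using assms unfolding hom_def power_def
    by (auto simp: PiE_iff Pi_iff)
qed

theorem proposition18:
  fixes ar :: "'o \<Rightarrow> 'n set"
    and E :: "(('v, 'o, 'n) trm \<times> ('v, 'o, 'n) trm) set"
    and L :: "('l, 'o, 'n) alg"
    and I :: "'i set"
    and X :: "'i \<Rightarrow> 'x set"
    and \<kappa> :: "'i \<Rightarrow> 'a \<Rightarrow> 'x \<Rightarrow> 'l"
    and A :: "'i \<Rightarrow> ('a, 'o, 'n) alg"
    and C :: "('c, 'o, 'n) alg"
    and \<mu> :: "'i \<Rightarrow> 'a \<Rightarrow> 'c"
    and K :: "'c \<Rightarrow> ('i \<Rightarrow> 'x) \<Rightarrow> 'l"
  assumes L_in: "in_variety ar E L"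
    and A_in: "\<forall>i\<in>I. in_variety ar E (A i)"
    and coprod: "is_coproduct TYPE('l) ar E I A C \<mu>"
    and systems: "\<forall>i\<in>I. affine_system ar L (X i) (\<kappa> i) (A i)"
    and sober_i: "\<forall>i\<in>I. sober ar L (X i) (\<kappa> i) (A i)"
    and prodmap: "is_product_map ar L I X \<kappa> A C \<mu> K"
  shows "affine_system ar L (Pi\<^sub>E I X) K C \<and> sober ar L (Pi\<^sub>E I X) K C"
proof -
  have algC: "algebra ar C" using coprod unfolding is_coproduct_def in_variety_def by auto
  have homK: "hom ar C (power ar L (Pi\<^sub>E I X)) K" using prodmap unfolding is_product_map_def by auto
  have Kmu: "\<And>i a x. i \<in> I \<Longrightarrow> a \<in> carrier (A i) \<Longrightarrow> x \<in> Pi\<^sub>E I X \<Longrightarrow> K (\<mu> i a) x = \<kappa> i a (x i)"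
    using prodmap unfolding is_product_map_def by auto
  have hommu: "\<And>i. i \<in> I \<Longrightarrow> hom ar (A i) C (\<mu> i)" using coprod unfolding is_coproduct_def by auto
  have algA: "\<And>i. i \<in> I \<Longrightarrow> algebra ar (A i)" using A_in unfolding in_variety_def by auto
  have bij: "\<And>i. i \<in> I \<Longrightarrow> bij_betw (ell (A i) (\<kappa> i)) (X i) (Pt ar L (A i))"
    using sober_i unfolding sober_def by auto
  have uniq: "\<And>f. (\<forall>i\<in>I. hom ar (A i) L (f i)) \<Longrightarrow>
        (\<exists>!g. g \<in> extensional (carrier C) \<and> hom ar C L g \<and>
              (\<forall>i\<in>I. \<forall>a\<in>carrier (A i). g (\<mu> i a) = f i a))"
    using coprod L_in unfolding is_coproduct_def by blast
  have ellPt: "ell C K x \<in> Pt ar L C" if "x \<in> Pi\<^sub>E I X" for x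
  proof -
    have "hom ar C L (\<lambda>c. K c x)" using hom_eval[OF homK that] .
    from hom_restrict[OF this algC] show ?thesis unfolding Pt_def ell_def by auto
  qed
  have inj: "inj_on (ell C K) (Pi\<^sub>E I X)"
  proof (rule inj_onI)
    fix x y assume x: "x \<in> Pi\<^sub>E I X" and y: "y \<in> Pi\<^sub>E I X" and e: "ell C K x = ell C K y"
    show "x = y"
    proof (rule ccontr)
      assume "x \<noteq> y"
      then obtain i where i: "x i \<noteq> y i" by blast
      have iI: "i \<in> I" using i x y by (metis PiE_arb)
      have xi: "x i \<in> X i" and yi: "y i \<in> X i" using x y iI by auto
      have "ell (A i) (\<kappa> i) (x i) \<noteq> ell (A i) (\<kappa> i) (y i)"
        using bij[OF iI] xi yi i unfolding bij_betw_def inj_on_def by blast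
      then obtain a where a: "a \<in> carrier (A i)" and ne: "\<kappa> i a (x i) \<noteq> \<kappa> i a (y i)"
        unfolding ell_def by (metis restrict_ext)
      have mc: "\<mu> i a \<in> carrier C" using hommu[OF iI] a unfolding hom_def by auto
      have "K (\<mu> i a) x = K (\<mu> i a) y" using e mc unfolding ell_def by (metis restrict_apply')
      then show False using Kmu[OF iI a x] Kmu[OF iI a y] ne by simp
    qed
  qed
  have surj: "Pt ar L C \<subseteq> ell C K ` Pi\<^sub>E I X"
  proof
    fix h assume h: "h \<in> Pt ar L C"
    have hh: "hom ar C L h" and he: "h \<in> extensional (carrier C)" using h unfolding Pt_def by auto
    define f where "f i = (\<lambda>a\<in>carrier (A i). h (\<mu> i a))" for i
    have fhom: "\<forall>i\<in>I. hom ar (A i) L (f i)"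
      unfolding f_def using hom_restrict[OF hom_comp[OF hommu hh] algA] by blast
    have fPt: "f i \<in> Pt ar L (A i)" if "i \<in> I" for i
      using fhom that unfolding Pt_def f_def by auto
    define x where "x = (\<lambda>i\<in>I. inv_into (X i) (ell (A i) (\<kappa> i)) (f i))"
    have xi: "x i \<in> X i" "ell (A i) (\<kappa> i) (x i) = f i" if "i \<in> I" for i
      using bij[OF that] fPt[OF that] that unfolding x_def
      by (auto simp: bij_betw_def inv_into_into f_inv_into_f)
    have x: "x \<in> Pi\<^sub>E I X" using xi unfolding x_def by auto
    have agree1: "\<forall>i\<in>I. \<forall>a\<in>carrier (A i). ell C K x (\<mu> i a) = f i a"
    proof (intro ballI)
      fix i a assume i: "i \<in> I" and a: "a \<in> carrier (A i)"
      have mc: "\<mu> i a \<in> carrier C" using hommu[OF i] a unfolding hom_def by auto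
      have "ell C K x (\<mu> i a) = \<kappa> i a (x i)" using mc Kmu[OF i a x] unfolding ell_def by simp
      also have "\<dots> = ell (A i) (\<kappa> i) (x i) a" using a unfolding ell_def by simp
      finally show "ell C K x (\<mu> i a) = f i a" using xi(2)[OF i] by simp
    qed
    have agree2: "\<forall>i\<in>I. \<forall>a\<in>carrier (A i). h (\<mu> i a) = f i a" unfolding f_def by simp
    have "ell C K x = h" using uniq[OF fhom] ellPt[OF x] agree1 agree2 hh he unfolding Pt_def by blast
    then show "h \<in> ell C K ` Pi\<^sub>E I X" using x by blast
  qed
  have "sober ar L (Pi\<^sub>E I X) K C"
    unfolding sober_def bij_betw_def using inj surj ellPt by blast
  moreover have "affine_system ar L (Pi\<^sub>E I X) K C" unfolding affine_system_def using algC homK by simp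
  ultimately show ?thesis by simp
qed

end
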